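(* Let $\breve{\mathcal{X}}_k\subset\mathbb{R}^n$ and $\mathcal{X}^{\rm F}_k\subset\mathbb{R}^n$ be constrained zonotopes and let $\check{\mathcal{X}}_k=\breve{\mathcal{X}}_k\cap_{I_n}\mathcal{X}^{\rm F}_k$. Let $g:\mathbb{R}^n\to\mathbb{R}^{m_c}$, let $\check{\mathcal{P}}_k\supseteq\check{\mathcal{X}}_k$ be a convex polytope, and suppose $g=g^{\rm a}-g^{\rm b}$ on $\check{\mathcal{P}}_k$ where $g^{\rm a},g^{\rm b}$ are differentiable and componentwise convex on $\check{\mathcal{P}}_k$. Let $\bar x\in\check{\mathcal{P}}_k$, $H=\nabla_xg(\bar x)$, and define $\bar g(x)=g(\bar x)+H(x-\bar x)$, $\bar g^{\rm a}(x)=g^{\rm a}(\bar x)+\nabla g^{\rm a}(\bar x)(x-\bar x)$, $\bar g^{\rm b}(x)=g^{\rm b}(\bar x)+\nabla g^{\rm b}(\bar x)(x-\bar x)$. For $i=1,\ldots,m_c$ let $$e^-_i=\min_{x\in\mathrm{vert}(\check{\mathcal{P}}_k)}\big(\bar g^{\rm a}_i(x)-g^{\rm b}_i(x)-\bar g_i(x)\big),\qquad e^+_i=\max_{x\in\mathrm{vert}(\check{\mathcal{P}}_k)}\big(g^{\rm a}_i(x)-\bar g^{\rm b}_i(x)-\bar g_i(x)\big),$$ and let $\mathcal{R}_k$ be the zonotope $\{\mathrm{diag}(\tfrac12(e^+-e^-)),\tfrac12(e^-+e^+)\}$ (the box $[e^-,e^+]$). Define $\mathcal{C}_k=\big(-g(\bar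 x)+H\bar x\big)\oplus(-\mathcal{R}_k)$. Then $$\{x\in\check{\mathcal{X}}_k:\ g(x)=0_{m_c\times1}\}\subseteq\tilde{\mathcal{X}}_k:=\check{\mathcal{X}}_k\cap_H\mathcal{C}_k,$$ and $\tilde{\mathcal{X}}_k$ is a constrained zonotope.
   Context: A constrained zonotope (CZ) is a set $\{G,c,A,b\}=\{G\xi+c:\xi\in[-1,1]^{n_g},\ A\xi=b\}$; a zonotope $\{G,c\}$ has no equality constraints. $\oplus$ is Minkowski sum (vectors treated as singletons), $-\mathcal{X}=\{-x:x\in\mathcal{X}\}$. The generalized intersection is $\mathcal{X}\cap_M\mathcal{W}=\{x\in\mathcal{X}:Mx\in\mathcal{W}\}$; $I_n$ is the $n\times n$ identity. $\mathrm{vert}(\mathcal{P})$ is the vertex set of the polytope $\mathcal{P}$. Vector-valued convexity is componentwise. *)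

theory Defs
  imports "HOL-Analysis.Analysis"
begin

definition cz_set ::
  "('j \<Rightarrow> real^'n) \<Rightarrow> 'j set \<Rightarrow> real^'n \<Rightarrow> ('k \<Rightarrow> 'j \<Rightarrow> real) \<Rightarrow> 'k set \<Rightarrow> ('k \<Rightarrow> real) \<Rightarrow> (real^'n) set"
  where "cz_set G J c A K b =
    {c + (\<Sum>j\<in>J. xi j *\<^sub>R G j) | xi.
       (\<forall>j\<in>J. \<bar>xi j\<bar> \<le> 1) \<and> (\<forall>k\<in>K. (\<Sum>j\<in>J. A k j * xi j) = b k)}"

definition zonotope_set :: "('j \<Rightarrow> real^'n) \<Rightarrow> 'j set \<Rightarrow> real^'n \<Rightarrow> (real^'n) set"
  where "zonotope_set G J c = cz_set G J c (\<lambda>_ _. 0) ({} :: nat set) (\<lambda>_. 0)"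

definition is_CZ :: "(real^'n) set \<Rightarrow> bool"
  where "is_CZ S \<longleftrightarrow> (\<exists>(G :: nat \<Rightarrow> real^'n) J c (A :: nat \<Rightarrow> nat \<Rightarrow> real) K b.
            finite J \<and> finite K \<and> S = cz_set G J c A K b)"

definition gen_inter :: "(real^'n) set \<Rightarrow> real^'n^'m \<Rightarrow> (real^'m) set \<Rightarrow> (real^'n) set"
  where "gen_inter X M W = {x \<in> X. M *v x \<in> W}"

definition msum :: "('a::plus) set \<Rightarrow> 'a set \<Rightarrow> 'a set"
  where "msum A B = {a + b | a b. a \<in> A \<and> b \<in> B}"

definition vert :: "('a::real_vector) set \<Rightarrow> 'a set"
  where "vert P = {v. v extreme_point_of P}"

end

theory Submission
  imports Defs
begin


lemma cz_reindex:
  fixes G :: "'j \<Rightarrow> real^'n" and A :: "'k \<Rightarrow> 'j \<Rightarrow> real"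
  assumes fJ: "finite J" and fK: "finite K"
  shows "is_CZ (cz_set G J c A K b)"
proof -
  obtain f :: "'j \<Rightarrow> nat" and n where f: "f ` J = {i. i < n}" "inj_on f J"
    using finite_imp_inj_to_nat_seg[OF fJ] by blast
  obtain h :: "'k \<Rightarrow> nat" and m where h: "h ` K = {i. i < m}" "inj_on h K"
    using finite_imp_inj_to_nat_seg[OF fK] by blast
  define fi where "fi = inv_into J f"
  define hi where "hi = inv_into K h"
  have fi: "\<And>j. j \<in> J \<Longrightarrow> fi (f j) = j" unfolding fi_def using f(2) by simp
  have hi: "\<And>k. k \<in> K \<Longrightarrow> hi (h k) = k" unfolding hi_def using h(2) by simp
  have "cz_set G J c A K b = cz_set (G \<circ> fi) (f ` J) c (\<lambda>k' j'. A (hi k') (fi j')) (h ` K) (b \<circ> hi)"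
  proof
    show "cz_set G J c A K b \<subseteq> cz_set (G \<circ> fi) (f ` J) c (\<lambda>k' j'. A (hi k') (fi j')) (h ` K) (b \<circ> hi)"
    proof
      fix x assume "x \<in> cz_set G J c A K b"
      then obtain xi where x: "x = c + (\<Sum>j\<in>J. xi j *\<^sub>R G j)" and b1: "\<forall>j\<in>J. \<bar>xi j\<bar> \<le> 1"
        and c1: "\<forall>k\<in>K. (\<Sum>j\<in>J. A k j * xi j) = b k" unfolding cz_set_def by blast
      have s1: "(\<Sum>j'\<in>f ` J. (xi \<circ> fi) j' *\<^sub>R (G \<circ> fi) j') = (\<Sum>j\<in>J. xi j *\<^sub>R G j)"
        by (simp add: sum.reindex[OF f(2)] fi)
      have s2: "(\<Sum>j'\<in>f ` J. A (hi k') (fi j') * (xi \<circ> fi) j') = (b \<circ> hi) k'" if kin: "k' \<in> h ` K" for k'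
      proof -
        obtain k where k: "k \<in> K" "k' = h k" using kin by blast
        show ?thesis using c1 k by (simp add: sum.reindex[OF f(2)] fi hi)
      qed
      show "x \<in> cz_set (G \<circ> fi) (f ` J) c (\<lambda>k' j'. A (hi k') (fi j')) (h ` K) (b \<circ> hi)"
        unfolding cz_set_def
        apply (rule CollectI, rule exI[of _ "xi \<circ> fi"])
        using s1 s2 b1 x fi by auto
    qed
  next
    show "cz_set (G \<circ> fi) (f ` J) c (\<lambda>k' j'. A (hi k') (fi j')) (h ` K) (b \<circ> hi) \<subseteq> cz_set G J c A K b"
    proof
      fix x assume "x \<in> cz_set (G \<circ> fi) (f ` J) c (\<lambda>k' j'. A (hi k') (fi j')) (h ` K) (b \<circ> hi)"
      then obtain xi where x: "x = c + (\<Sum>j\<in>f ` J. xi j *\<^sub>R (G \<circ> fi) j)" and b1: "\<forall>j\<in>f ` J. \<bar>xi j\<bar> \<le> 1"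
        and c1: "\<forall>k\<in>h ` K. (\<Sum>j\<in>f ` J. A (hi k) (fi j) * xi j) = (b \<circ> hi) k" unfolding cz_set_def by blast
      have s1: "(\<Sum>j\<in>f ` J. xi j *\<^sub>R (G \<circ> fi) j) = (\<Sum>j\<in>J. (xi \<circ> f) j *\<^sub>R G j)"
        by (simp add: sum.reindex[OF f(2)] fi)
      have s2: "(\<Sum>j\<in>J. A k j * (xi \<circ> f) j) = b k" if "k \<in> K" for k
      proof -
        have "(\<Sum>j\<in>f ` J. A (hi (h k)) (fi j) * xi j) = (b \<circ> hi) (h k)" using c1 that by blast
        thus ?thesis using that by (simp add: sum.reindex[OF f(2)] fi hi)
      qed
      show "x \<in> cz_set G J c A K b"
        unfolding cz_set_def
        apply (rule CollectI, rule exI[of _ "xi \<circ> f"])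
        using s1 s2 b1 x by auto
    qed
  qed
  moreover have "finite (f ` J)" "finite (h ` K)" using fJ fK by auto
  ultimately show ?thesis unfolding is_CZ_def by blast
qed


lemma tangent_ineq:
  fixes F :: "real^'n \<Rightarrow> real^'m"
  assumes cv: "convex_on P (\<lambda>y. F y $ i)" and cP: "convex P" and aP: "a \<in> P" and xP: "x \<in> P"
    and D: "(F has_derivative (\<lambda>y. J *v y)) (at a)"
  shows "F a $ i + (J *v (x - a)) $ i \<le> F x $ i"
proof -
  define d where "d = x - a"
  define q where "q t = F (a + t *\<^sub>R d) $ i" for t :: real
  have inner: "((\<lambda>t::real. a + t *\<^sub>R d) has_derivative (\<lambda>t. t *\<^sub>R d)) (at 0)"
    by (auto intro!: derivative_eq_intros)
  have D0: "(F has_derivative (\<lambda>y. J *v y)) (at (a + 0 *\<^sub>R d))" using D by simp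
  have "((F \<circ> (\<lambda>t::real. a + t *\<^sub>R d)) has_derivative ((\<lambda>y. J *v y) \<circ> (\<lambda>t. t *\<^sub>R d))) (at 0)"
    by (rule diff_chain_at[OF inner D0])
  hence "((\<lambda>t. (F (a + t *\<^sub>R d)) $ i) has_derivative (\<lambda>t. ((J *v (t *\<^sub>R d))) $ i)) (at 0)"
    using bounded_linear.has_derivative[OF bounded_linear_vec_nth] unfolding o_def by blast
  hence "(q has_derivative (\<lambda>t. (J *v d) $ i * t)) (at 0)"
    unfolding q_def by (simp add: matrix_vector_mult_scaleR mult.commute)
  hence "(q has_real_derivative (J *v d) $ i) (at 0)"
    by (simp add: has_field_derivative_def)
  hence lim: "((\<lambda>t. (q t - q 0) / (t - 0)) \<longlongrightarrow> (J *v d) $ i) (at 0)"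
    using DERIV_def has_field_derivative_iff by blast
  hence lim2: "((\<lambda>t. (q t - q 0) / t) \<longlongrightarrow> (J *v d) $ i) (at_right 0)"
    by (simp add: filterlim_at_split)
  have ev: "eventually (\<lambda>t. (q t - q 0) / t \<le> q 1 - q 0) (at_right (0::real))"
  proof -
    have "eventually (\<lambda>t::real. t \<in> {0<..<1}) (at_right 0)"
      by (simp add: eventually_at_right_field) (metis zero_less_one)
    moreover have "(q t - q 0) / t \<le> q 1 - q 0" if "t \<in> {0<..<1}" for t
    proof -
      have "a + t *\<^sub>R d = (1 - t) *\<^sub>R a + t *\<^sub>R x" by (simp add: d_def algebra_simps)
      hence "q t \<le> (1 - t) * q 0 + t * q 1"
        using convex_onD[OF cv, of t a x] that aP xP by (simp add: q_def d_def)
      hence "q t - q 0 \<le> t * (q 1 - q 0)" by (simp add: algebra_simps)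
      thus ?thesis using that by (simp add: divide_le_eq mult.commute)
    qed
    ultimately show ?thesis by (auto elim: eventually_mono)
  qed
  have "(J *v d) $ i \<le> q 1 - q 0"
    by (rule tendsto_upperbound[OF lim2 ev]) simp
  thus ?thesis by (simp add: q_def d_def)
qed


lemma mv_sum: fixes M :: "real^'n^'m" shows "M *v (\<Sum>j\<in>S. f j *\<^sub>R v j) = (\<Sum>j\<in>S. f j *\<^sub>R (M *v v j))"
  by (induct S rule: infinite_finite_induct) (simp_all add: matrix_vector_right_distrib matrix_vector_mult_scaleR)

lemma gen_inter_CZ:
  fixes X :: "(real^'n) set" and W :: "(real^'m) set" and M :: "real^'n^'m"
  assumes X: "is_CZ X" and W: "is_CZ W"
  shows "is_CZ (gen_inter X M W)"
proof -
  obtain Gx :: "nat \<Rightarrow> real^'n" and Jx cx and Ax :: "nat \<Rightarrow> nat \<Rightarrow> real" and Kx bx where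
    fx: "finite Jx" "finite Kx" and Xe: "X = cz_set Gx Jx cx Ax Kx bx"
    using X unfolding is_CZ_def by blast
  obtain Gw :: "nat \<Rightarrow> real^'m" and Jw cw and Aw :: "nat \<Rightarrow> nat \<Rightarrow> real" and Kw bw where
    fw: "finite Jw" "finite Kw" and We: "W = cz_set Gw Jw cw Aw Kw bw"
    using W unfolding is_CZ_def by blast
  define G :: "nat + nat \<Rightarrow> real^'n" where "G = case_sum Gx (\<lambda>_. 0)"
  define A :: "nat + (nat + 'm) \<Rightarrow> nat + nat \<Rightarrow> real" where
    "A = (\<lambda>k j. case k of Inl k \<Rightarrow> case_sum (Ax k) (\<lambda>_. 0) j
                  | Inr (Inl k) \<Rightarrow> case_sum (\<lambda>_. 0) (Aw k) j
                  | Inr (Inr i) \<Rightarrow> case_sum (\<lambda>j. (M *v Gx j) $ i) (\<lambda>j. - (Gw j $ i)) j)"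
  define b :: "nat + (nat + 'm) \<Rightarrow> real" where
    "b = (\<lambda>k. case k of Inl k \<Rightarrow> bx k | Inr (Inl k) \<Rightarrow> bw k | Inr (Inr i) \<Rightarrow> cw $ i - (M *v cx) $ i)"
  define J where "J = Jx <+> Jw"
  define K where "K = Kx <+> (Kw <+> (UNIV :: 'm set))"
  have fJ: "finite J" "finite K" using fx fw unfolding J_def K_def by auto
  have sumG: "(\<Sum>j\<in>J. xi j *\<^sub>R G j) = (\<Sum>j\<in>Jx. xi (Inl j) *\<^sub>R Gx j)" for xi
    unfolding J_def G_def using fx fw by (simp add: sum.Plus o_def)
  have "gen_inter X M W = cz_set G J cx A K b"
  proof
    show "gen_inter X M W \<subseteq> cz_set G J cx A K b"
    proof
      fix x assume "x \<in> gen_inter X M W"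
      then have xX: "x \<in> X" and MxW: "M *v x \<in> W" unfolding gen_inter_def by auto
      obtain xix where x: "x = cx + (\<Sum>j\<in>Jx. xix j *\<^sub>R Gx j)" and b1: "\<forall>j\<in>Jx. \<bar>xix j\<bar> \<le> 1"
        and c1: "\<forall>k\<in>Kx. (\<Sum>j\<in>Jx. Ax k j * xix j) = bx k" using xX unfolding Xe cz_set_def by blast
      obtain xiw where w: "M *v x = cw + (\<Sum>j\<in>Jw. xiw j *\<^sub>R Gw j)" and b2: "\<forall>j\<in>Jw. \<bar>xiw j\<bar> \<le> 1"
        and c2: "\<forall>k\<in>Kw. (\<Sum>j\<in>Jw. Aw k j * xiw j) = bw k" using MxW unfolding We cz_set_def by blast
      define xi where "xi = case_sum xix xiw"
      have Mx: "M *v x = M *v cx + (\<Sum>j\<in>Jx. xix j *\<^sub>R (M *v Gx j))"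
        unfolding x by (simp add: matrix_vector_right_distrib mv_sum)
      have ci: "(\<Sum>j\<in>Jx. (M *v Gx j) $ i * xix j) + (\<Sum>j\<in>Jw. - (Gw j $ i) * xiw j) = cw $ i - (M *v cx) $ i" for i
      proof -
        have "(M *v x) $ i = (M *v cx) $ i + (\<Sum>j\<in>Jx. xix j * (M *v Gx j) $ i)" using Mx by simp
        moreover have "(M *v x) $ i = cw $ i + (\<Sum>j\<in>Jw. xiw j * Gw j $ i)" using w by simp
        ultimately show ?thesis by (simp add: sum_negf mult.commute)
      qed
      have "x = cx + (\<Sum>j\<in>J. xi j *\<^sub>R G j)" unfolding sumG xi_def using x by simp
      moreover have "\<forall>j\<in>J. \<bar>xi j\<bar> \<le> 1" unfolding J_def xi_def using b1 b2 by auto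
      moreover have "\<forall>k\<in>K. (\<Sum>j\<in>J. A k j * xi j) = b k"
        unfolding K_def J_def A_def b_def xi_def using c1 c2 ci fx fw
        by (auto simp: sum.Plus o_def)
      ultimately show "x \<in> cz_set G J cx A K b" unfolding cz_set_def by blast
    qed
  next
    show "cz_set G J cx A K b \<subseteq> gen_inter X M W"
    proof
      fix x assume "x \<in> cz_set G J cx A K b"
      then obtain xi where x: "x = cx + (\<Sum>j\<in>J. xi j *\<^sub>R G j)" and b1: "\<forall>j\<in>J. \<bar>xi j\<bar> \<le> 1"
        and c1: "\<forall>k\<in>K. (\<Sum>j\<in>J. A k j * xi j) = b k" unfolding cz_set_def by blast
      have x': "x = cx + (\<Sum>j\<in>Jx. xi (Inl j) *\<^sub>R Gx j)" using x sumG by simp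
      have ck: "\<forall>k\<in>Kx. (\<Sum>j\<in>Jx. Ax k j * xi (Inl j)) = bx k"
      proof
        fix k assume "k \<in> Kx"
        hence "Inl k \<in> K" unfolding K_def by auto
        thus "(\<Sum>j\<in>Jx. Ax k j * xi (Inl j)) = bx k"
          using c1 fx fw unfolding J_def A_def b_def by (auto simp: sum.Plus o_def)
      qed
      have cw: "\<forall>k\<in>Kw. (\<Sum>j\<in>Jw. Aw k j * xi (Inr j)) = bw k"
      proof
        fix k assume "k \<in> Kw"
        hence "Inr (Inl k) \<in> K" unfolding K_def by auto
        thus "(\<Sum>j\<in>Jw. Aw k j * xi (Inr j)) = bw k"
          using c1 fx fw unfolding J_def A_def b_def by (auto simp: sum.Plus o_def)
      qed
      have ci: "(\<Sum>j\<in>Jx. (M *v Gx j) $ i * xi (Inl j)) + (\<Sum>j\<in>Jw. - (Gw j $ i) * xi (Inr j)) = cw $ i - (M *v cx) $ i" for i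
      proof -
        have "Inr (Inr i) \<in> K" unfolding K_def by auto
        thus ?thesis using c1 fx fw unfolding J_def A_def b_def by (auto simp: sum.Plus o_def)
      qed
      have "x \<in> X" unfolding Xe cz_set_def using x' ck b1 unfolding J_def by auto
      moreover have "M *v x = cw + (\<Sum>j\<in>Jw. xi (Inr j) *\<^sub>R Gw j)"
      proof (subst vec_eq_iff, intro allI)
        fix i
        have "(M *v x) $ i = (M *v cx) $ i + (\<Sum>j\<in>Jx. xi (Inl j) * (M *v Gx j) $ i)"
          unfolding x' by (simp add: matrix_vector_right_distrib mv_sum)
        thus "(M *v x) $ i = (cw + (\<Sum>j\<in>Jw. xi (Inr j) *\<^sub>R Gw j)) $ i"
          using ci[of i] by (simp add: sum_negf mult.commute)
      qed
      hence "M *v x \<in> W" unfolding We cz_set_def using cw b1 unfolding J_def by auto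
      ultimately show "x \<in> gen_inter X M W" unfolding gen_inter_def by auto
    qed
  qed
  thus ?thesis using cz_reindex[OF fJ] by simp
qed


lemma aff_conv:
  fixes L :: "real^'n^'m"
  assumes "convex S"
  shows "convex_on S (\<lambda>y. a + (L *v (y - z)) $ i)" "convex_on S (\<lambda>y. - (a + (L *v (y - z)) $ i))"
proof -
  have key: "a + (L *v (u *\<^sub>R x + v *\<^sub>R y - z)) $ i = u * (a + (L *v (x - z)) $ i) + v * (a + (L *v (y - z)) $ i)"
    if "u + v = 1" for u v x y
  proof -
    have "u *\<^sub>R x + v *\<^sub>R y - z = u *\<^sub>R (x - z) + v *\<^sub>R (y - z)"
      using that by (simp add: algebra_simps flip: scaleR_add_left)
    hence "(L *v (u *\<^sub>R x + v *\<^sub>R y - z)) $ i = u * (L *v (x - z)) $ i + v * (L *v (y - z)) $ i"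
      by (simp add: matrix_vector_right_distrib matrix_vector_mult_scaleR)
    moreover have "a = u * a + v * a" using that by (simp flip: distrib_right)
    ultimately show ?thesis by (simp add: algebra_simps)
  qed
  show "convex_on S (\<lambda>y. a + (L *v (y - z)) $ i)"
    using assms key unfolding convex_on_def by simp
  show "convex_on S (\<lambda>y. - (a + (L *v (y - z)) $ i))"
    using assms key unfolding convex_on_def by (simp add: algebra_simps)
qed

lemma C_CZ:
  fixes Gr :: "'m \<Rightarrow> real^'m"
  shows "is_CZ (msum {d} (uminus ` zonotope_set Gr (UNIV::'m set) cr))"
proof -
  have "msum {d} (uminus ` zonotope_set Gr (UNIV::'m set) cr) =
        cz_set (\<lambda>j. - Gr j) UNIV (d - cr) (\<lambda>_ _. (0::real)) ({}::nat set) (\<lambda>_. 0)"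
  proof
    show "msum {d} (uminus ` zonotope_set Gr UNIV cr) \<subseteq> cz_set (\<lambda>j. - Gr j) UNIV (d - cr) (\<lambda>_ _. (0::real)) ({}::nat set) (\<lambda>_. 0)"
    proof
      fix x assume "x \<in> msum {d} (uminus ` zonotope_set Gr UNIV cr)"
      then obtain xi where x: "x = d + - (cr + (\<Sum>j\<in>UNIV. xi j *\<^sub>R Gr j))" and b: "\<forall>j. \<bar>xi j\<bar> \<le> 1"
        unfolding msum_def zonotope_set_def cz_set_def by auto
      have "x = (d - cr) + (\<Sum>j\<in>UNIV. xi j *\<^sub>R - Gr j)" unfolding x by (simp add: sum_negf)
      thus "x \<in> cz_set (\<lambda>j. - Gr j) UNIV (d - cr) (\<lambda>_ _. (0::real)) ({}::nat set) (\<lambda>_. 0)"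
        unfolding cz_set_def using b by auto
    qed
  next
    show "cz_set (\<lambda>j. - Gr j) UNIV (d - cr) (\<lambda>_ _. (0::real)) ({}::nat set) (\<lambda>_. 0) \<subseteq> msum {d} (uminus ` zonotope_set Gr UNIV cr)"
    proof
      fix x assume "x \<in> cz_set (\<lambda>j. - Gr j) UNIV (d - cr) (\<lambda>_ _. (0::real)) ({}::nat set) (\<lambda>_. 0)"
      then obtain xi where x: "x = (d - cr) + (\<Sum>j\<in>UNIV. xi j *\<^sub>R - Gr j)" and b: "\<forall>j. \<bar>xi j\<bar> \<le> 1"
        unfolding cz_set_def by auto
      have "cr + (\<Sum>j\<in>UNIV. xi j *\<^sub>R Gr j) \<in> zonotope_set Gr UNIV cr"
        unfolding zonotope_set_def cz_set_def using b by auto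
      moreover have "x = d + - (cr + (\<Sum>j\<in>UNIV. xi j *\<^sub>R Gr j))" unfolding x by (simp add: sum_negf)
      ultimately show "x \<in> msum {d} (uminus ` zonotope_set Gr UNIV cr)"
        unfolding msum_def by blast
    qed
  qed
  thus ?thesis using cz_reindex[of "UNIV::'m set" "{}::nat set"] by simp
qed

lemma box_sum:
  fixes s xi :: "'m::finite \<Rightarrow> real"
  shows "(\<Sum>j\<in>(UNIV::'m set). xi j *\<^sub>R (s j *\<^sub>R axis j (1::real))) $ i = xi i * s i"
  by (simp add: axis_def if_distrib cong: if_cong)

theorem corollary1:
  fixes Xb XF P :: "(real^'n) set"
    and g ga gb :: "real^'n \<Rightarrow> real^'m"
    and xbar :: "real^'n"
    and H Ja Jb :: "real^'n^'m"
  assumes Xb: "is_CZ Xb"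
    and XF: "is_CZ XF"
    and P_poly: "polytope P"
    and P_sup: "gen_inter Xb (mat 1) XF \<subseteq> P"
    and g_dc: "\<forall>x\<in>P. g x = ga x - gb x"
    and ga_diff: "\<forall>x\<in>P. ga differentiable (at x)"
    and gb_diff: "\<forall>x\<in>P. gb differentiable (at x)"
    and ga_conv: "\<forall>i. convex_on P (\<lambda>x. ga x $ i)"
    and gb_conv: "\<forall>i. convex_on P (\<lambda>x. gb x $ i)"
    and xbar: "xbar \<in> P"
    and H: "(g has_derivative (\<lambda>y. H *v y)) (at xbar)"
    and Ja: "(ga has_derivative (\<lambda>y. Ja *v y)) (at xbar)"
    and Jb: "(gb has_derivative (\<lambda>y. Jb *v y)) (at xbar)"
  shows "let Xc = gen_inter Xb (mat 1) XF;
             gbar = (\<lambda>x. g xbar + H *v (x - xbar));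
             gabar = (\<lambda>x. ga xbar + Ja *v (x - xbar));
             gbbar = (\<lambda>x. gb xbar + Jb *v (x - xbar));
             em = (\<chi> i. Min ((\<lambda>x. gabar x $ i - gb x $ i - gbar x $ i) ` vert P));
             ep = (\<chi> i. Max ((\<lambda>x. ga x $ i - gbbar x $ i - gbar x $ i) ` vert P));
             R = zonotope_set (\<lambda>j. ((ep $ j - em $ j) / 2) *\<^sub>R axis j 1) (UNIV :: 'm set)
                   ((1/2) *\<^sub>R (em + ep));
             C = msum {- g xbar + H *v xbar} (uminus ` R);
             Xt = gen_inter Xc H C
         in {x \<in> Xc. g x = 0} \<subseteq> Xt \<and> is_CZ Xt"
proof -
  define Xc where "Xc = gen_inter Xb (mat 1) XF"
  define gbar where "gbar = (\<lambda>x. g xbar + H *v (x - xbar))"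
  define gabar where "gabar = (\<lambda>x. ga xbar + Ja *v (x - xbar))"
  define gbbar where "gbbar = (\<lambda>x. gb xbar + Jb *v (x - xbar))"
  define em where "em = (\<chi> i. Min ((\<lambda>x. gabar x $ i - gb x $ i - gbar x $ i) ` vert P))"
  define ep where "ep = (\<chi> i. Max ((\<lambda>x. ga x $ i - gbbar x $ i - gbar x $ i) ` vert P))"
  define R where "R = zonotope_set (\<lambda>j. ((ep $ j - em $ j) / 2) *\<^sub>R axis j 1) (UNIV :: 'm set)
                   ((1/2) *\<^sub>R (em + ep))"
  define C where "C = msum {- g xbar + H *v xbar} (uminus ` R)"
  define Xt where "Xt = gen_inter Xc H C"
  have cP: "convex P" using P_poly polytope_imp_convex by blast
  define V where "V = vert P"
  have fV: "finite V" unfolding V_def vert_def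
    using finite_polyhedron_extreme_points polytope_imp_polyhedron P_poly by blast
  have PV: "P = convex hull V" unfolding V_def vert_def
    using Krein_Milman_Minkowski polytope_imp_compact polytope_imp_convex P_poly by blast
  have Vne: "V \<noteq> {}" using PV xbar by auto
  have bounds: "em $ i \<le> (g x - gbar x) $ i \<and> (g x - gbar x) $ i \<le> ep $ i" if xP: "x \<in> P" for x i
  proof
    define phi where "phi y = ga y $ i - gbbar y $ i - gbar y $ i" for y
    define psi where "psi y = gabar y $ i - gb y $ i - gbar y $ i" for y
    have phic: "convex_on P phi"
    proof -
      have "convex_on P (\<lambda>y. ga y $ i + (- (gb xbar $ i + (Jb *v (y - xbar)) $ i)) + (- (g xbar $ i + (H *v (y - xbar)) $ i)))"
        using convex_on_add[OF convex_on_add[OF spec[OF ga_conv, of i] aff_conv(2)[OF cP]] aff_conv(2)[OF cP]] .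
      thus ?thesis unfolding phi_def gbbar_def gbar_def by (simp add: algebra_simps)
    qed
    have psic: "convex_on P (\<lambda>y. - psi y)"
    proof -
      have "convex_on P (\<lambda>y. gb y $ i + (- (ga xbar $ i + (Ja *v (y - xbar)) $ i)) + (g xbar $ i + (H *v (y - xbar)) $ i))"
        using convex_on_add[OF convex_on_add[OF spec[OF gb_conv, of i] aff_conv(2)[OF cP]] aff_conv(1)[OF cP]] .
      thus ?thesis unfolding psi_def gabar_def gbar_def by (simp add: algebra_simps)
    qed
    have ta: "gabar x $ i \<le> ga x $ i" unfolding gabar_def using tangent_ineq[OF _ cP xbar xP Ja] ga_conv by simp
    have tb: "gbbar x $ i \<le> gb x $ i" unfolding gbbar_def using tangent_ineq[OF _ cP xbar xP Jb] gb_conv by simp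
    have gx: "(g x - gbar x) $ i = ga x $ i - gb x $ i - gbar x $ i" using g_dc xP by simp
    have "phi x \<le> Max (phi ` V)"
      using convex_on_convex_hull_bound[of V phi "Max (phi ` V)"] phic fV xP PV by auto
    moreover have "- psi x \<le> - Min (psi ` V)"
      using convex_on_convex_hull_bound[of V "\<lambda>y. - psi y" "- Min (psi ` V)"] psic fV xP PV by auto
    moreover have "ep $ i = Max (phi ` V)" "em $ i = Min (psi ` V)"
      unfolding ep_def em_def phi_def psi_def V_def by simp_all
    ultimately show "em $ i \<le> (g x - gbar x) $ i" "(g x - gbar x) $ i \<le> ep $ i"
      using ta tb gx unfolding phi_def psi_def by auto
  qed
  have part1: "{x \<in> Xc. g x = 0} \<subseteq> Xt"
  proof
    fix x assume "x \<in> {x \<in> Xc. g x = 0}"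
    hence xXc: "x \<in> Xc" and g0: "g x = 0" by auto
    have xP: "x \<in> P" using xXc P_sup unfolding Xc_def by auto
    define r where "r = (- g xbar + H *v xbar) - H *v x"
    have rr: "r $ i = (g x - gbar x) $ i" for i
      unfolding r_def gbar_def g0 by (simp add: matrix_vector_mult_diff_distrib)
    define s where "s j = (ep $ j - em $ j) / 2" for j
    define cr :: "real^'m" where "cr = (1/2) *\<^sub>R (em + ep)"
    define xi where "xi j = (if s j = 0 then 0 else (r $ j - cr $ j) / s j)" for j
    have bj: "em $ j \<le> r $ j \<and> r $ j \<le> ep $ j" for j using bounds[OF xP] rr by simp
    have "\<bar>xi j\<bar> \<le> 1" for j
    proof (cases "s j = 0")
      case False
      have "s j > 0" using bj[of j] False unfolding s_def by auto
      moreover have "\<bar>r $ j - cr $ j\<bar> \<le> s j" using bj[of j] unfolding s_def cr_def abs_le_iff by (simp add: field_simps)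
      moreover have "\<bar>xi j\<bar> = \<bar>r $ j - cr $ j\<bar> / s j"
        using False \<open>s j > 0\<close> by (simp add: xi_def abs_divide)
      ultimately show ?thesis by simp
    qed (simp add: xi_def)
    moreover have "r = cr + (\<Sum>j\<in>UNIV. xi j *\<^sub>R (s j *\<^sub>R axis j 1))"
    proof (subst vec_eq_iff, intro allI)
      fix i
      have "r $ i = cr $ i + xi i * s i"
      proof (cases "s i = 0")
        case True
        hence "em $ i = ep $ i" unfolding s_def by simp
        thus ?thesis using bj[of i] True unfolding cr_def by simp
      qed (simp add: xi_def)
      thus "r $ i = (cr + (\<Sum>j\<in>UNIV. xi j *\<^sub>R (s j *\<^sub>R axis j 1))) $ i"
        by (simp only: vector_add_component box_sum)
    qed
    ultimately have "r \<in> R" unfolding R_def zonotope_set_def cz_set_def s_def cr_def by auto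
    moreover have "H *v x = (- g xbar + H *v xbar) + - r" unfolding r_def by simp
    ultimately have "H *v x \<in> C" unfolding C_def msum_def by blast
    thus "x \<in> Xt" unfolding Xt_def gen_inter_def using xXc by simp
  qed
  have part2: "is_CZ Xt"
    unfolding Xt_def Xc_def C_def R_def
    by (intro gen_inter_CZ Xb XF C_CZ)
  show ?thesis using part1 part2
    by (simp only: Let_def Xt_def Xc_def C_def R_def ep_def em_def gbar_def gabar_def gbbar_def)
qed

end
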